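(* Let $n\ge 2$ and let $p,q$ be positive integers with $\gcd(p,q)=1$. Let $A$ be the $n\times n$ integer matrix with columns $a_k=q e_k-p e_{k+1}$ ($1\le k\le n-1$) and $a_n=q e_n+p e_1$. Then for every $i\in\{1,\dots,n\}$, $$\min\{l\in\mathbb{Z}_{\ge1} : l e_i\in A\mathbb{Z}^n\}=p^n+q^n.$$ In particular, if moreover $p\neq q$, there exists a unilateral tiling of $(\mathbb{Z}/(p^n+q^n)\mathbb{Z})^n$ by discrete hypercubes of side lengths $p$ and $q$.
   Context: $e_i$ denotes the $i$-th standard unit vector. Let $N=p^n+q^n$. A discrete hypercube of side length $s$ in $(\mathbb{Z}/N\mathbb{Z})^n$ is the image of a set $x+\{0,1,\dots,s-1\}^n$, $x\in\mathbb{Z}^n$, under reduction modulo $N$. A tiling of $(\mathbb{Z}/N\mathbb{Z})^n$ by such hypercubes is a family of them that partitions $(\mathbb{Z}/N\mathbb{Z})^n$; it is unilateral if no two distinct tiles of the same side length $s$ share a full facet, i.e. there are no two tiles of side $s$ with corners $x,x'$ such that $x'-x\equiv \pm s e_i \pmod N$ for some $i$. *)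

theory Defs
  imports "HOL-Number_Theory.Number_Theory"
begin

text \<open>Vectors of Z^n are functions nat => int; only coordinates 0..n-1 matter
  (coordinates are 0-indexed: paper's e_1..e_n are unitv 0 .. unitv (n-1)).\<close>

definition unitv :: "nat \<Rightarrow> nat \<Rightarrow> int" where
  "unitv i = (\<lambda>j. if j = i then 1 else 0)"

definition colA :: "nat \<Rightarrow> nat \<Rightarrow> nat \<Rightarrow> nat \<Rightarrow> nat \<Rightarrow> int" where
  "colA n p q k = (if k + 1 < n
      then (\<lambda>j. int q * unitv k j - int p * unitv (k + 1) j)
      else (\<lambda>j. int q * unitv k j + int p * unitv 0 j))"

definition latticeA :: "nat \<Rightarrow> nat \<Rightarrow> nat \<Rightarrow> (nat \<Rightarrow> int) set" where
  "latticeA n p q = {(\<lambda>j. \<Sum>k<n. c k * colA n p q k j) | c :: nat \<Rightarrow> int. True}"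

text \<open>Points of (Z/NZ)^n, represented by canonical residues in coordinates < n
  and 0 elsewhere.\<close>
definition torus :: "nat \<Rightarrow> int \<Rightarrow> (nat \<Rightarrow> int) set" where
  "torus n N = {y. (\<forall>j<n. 0 \<le> y j \<and> y j < N) \<and> (\<forall>j\<ge>n. y j = 0)}"

definition cube :: "nat \<Rightarrow> int \<Rightarrow> (nat \<Rightarrow> int) \<Rightarrow> nat \<Rightarrow> (nat \<Rightarrow> int) set" where
  "cube n N x s = {(\<lambda>j. if j < n then (x j + d j) mod N else 0) | d.
                    \<forall>j<n. 0 \<le> d j \<and> d j < int s}"

text \<open>A tiling: a family T of tiles (corner, side) such that every point of the
  torus lies in exactly one tile of the family (cubes are automatically subsets).\<close>
definition is_tiling :: "nat \<Rightarrow> int \<Rightarrow> ((nat \<Rightarrow> int) \<times> nat) set \<Rightarrow> bool" where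
  "is_tiling n N T \<longleftrightarrow> (\<forall>y\<in>torus n N. \<exists>!t. t \<in> T \<and> y \<in> cube n N (fst t) (snd t))"

definition unilateral :: "nat \<Rightarrow> int \<Rightarrow> ((nat \<Rightarrow> int) \<times> nat) set \<Rightarrow> bool" where
  "unilateral n N T \<longleftrightarrow>
     \<not> (\<exists>x x' s. (x, s) \<in> T \<and> (x', s) \<in> T \<and> (x, s) \<noteq> (x', s) \<and>
          (\<exists>i<n. (\<forall>j<n. [x' j - x j = int s * unitv i j] (mod N)) \<or>
                 (\<forall>j<n. [x' j - x j = - (int s * unitv i j)] (mod N))))"

end

theory Submission
  imports Defs
begin

lemma card_torus: assumes "s \<ge> 0" shows "card (torus m s) = nat s ^ m"
proof (induction m)
  case 0
  have "torus 0 s = {\<lambda>j. 0}" unfolding torus_def by auto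
  then show ?case by simp
next
  case (Suc m)
  have eq: "torus (Suc m) s = (\<lambda>(y, a). y(m := a)) ` (torus m s \<times> {0..<s})"
  proof
    show "torus (Suc m) s \<subseteq> (\<lambda>(y, a). y(m := a)) ` (torus m s \<times> {0..<s})"
    proof
      fix z assume z: "z \<in> torus (Suc m) s"
      have "z(m := 0) \<in> torus m s" using z unfolding torus_def by auto
      moreover have "z m \<in> {0..<s}" using z unfolding torus_def by auto
      ultimately show "z \<in> (\<lambda>(y, a). y(m := a)) ` (torus m s \<times> {0..<s})"
        by (intro image_eqI[where x="(z(m := 0), z m)"]) auto
    qed
  next
    show "(\<lambda>(y, a). y(m := a)) ` (torus m s \<times> {0..<s}) \<subseteq> torus (Suc m) s"
      unfolding torus_def by (auto simp: less_Suc_eq)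
  qed
  have inj: "inj_on (\<lambda>(y, a). y(m := a)) (torus m s \<times> {0..<s})"
  proof (rule inj_onI, clarify)
    fix y a y' a' assume y: "y \<in> torus m s" and y': "y' \<in> torus m s" and e: "y(m := a) = y'(m := a')"
    have "a = a'" using fun_cong[OF e, of m] by simp
    moreover have "y = y'"
    proof
      fix j show "y j = y' j"
      proof (cases "j = m")
        case True then show ?thesis using y y' unfolding torus_def by auto
      next
        case False then show ?thesis using fun_cong[OF e, of j] by simp
      qed
    qed
    ultimately show "y = y' \<and> a = a'" by simp
  qed
  have fin: "finite (torus m s)"
  proof (cases "s = 0")
    case True
    then have "torus m s \<subseteq> {\<lambda>j. 0}" unfolding torus_def by (auto, force)
    then show ?thesis using finite_subset by blast
  next
    case False
    then have "card (torus m s) > 0" using Suc assms by simp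
    then show ?thesis using card_ge_0_finite by blast
  qed
  have "card (torus (Suc m) s) = card (torus m s \<times> {0..<s})"
    unfolding eq by (rule card_image[OF inj])
  also have "\<dots> = card (torus m s) * nat s" using fin by (simp add: card_cartesian_product)
  finally show ?case using Suc by simp
qed

lemma finite_torus: assumes "s > 0" shows "finite (torus m s)"
proof -
  have "card (torus m s) > 0" using card_torus[of s m] assms by simp
  then show ?thesis using card_ge_0_finite by blast
qed

locale tl =
  fixes n p q :: nat
  assumes n2: "n \<ge> 2" and pp: "p > 0" and qp: "q > 0" and cop: "coprime p q"
begin

abbreviation "L \<equiv> latticeA n p q"
abbreviation "NN \<equiv> int p ^ n + int q ^ n"
abbreviation "V \<equiv> {y::nat\<Rightarrow>int. \<forall>j\<ge>n. y j = 0}"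

lemma lat_iff: "y \<in> L \<longleftrightarrow> (\<exists>c. y = (\<lambda>j. \<Sum>k<n. c k * colA n p q k j))"
  unfolding latticeA_def by auto

lemma lat_add: assumes "y \<in> L" "z \<in> L" shows "(\<lambda>j. y j + z j) \<in> L"
proof -
  obtain c c' where c: "y = (\<lambda>j. \<Sum>k<n. c k * colA n p q k j)" "z = (\<lambda>j. \<Sum>k<n. c' k * colA n p q k j)"
    using assms lat_iff by metis
  show ?thesis unfolding lat_iff
    by (rule exI[of _ "\<lambda>k. c k + c' k"]) (simp add: c algebra_simps sum.distrib)
qed

lemma lat_smult: assumes "y \<in> L" shows "(\<lambda>j. a * y j) \<in> L"
proof -
  obtain c where c: "y = (\<lambda>j. \<Sum>k<n. c k * colA n p q k j)"
    using assms lat_iff by metis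
  show ?thesis unfolding lat_iff
    by (rule exI[of _ "\<lambda>k. a * c k"]) (simp add: c sum_distrib_left mult.assoc)
qed

lemma lat_diff: assumes "y \<in> L" "z \<in> L" shows "(\<lambda>j. y j - z j) \<in> L"
  using lat_add[OF assms(1) lat_smult[OF assms(2), of "-1"]] by simp

lemma lat_neg: assumes "y \<in> L" shows "(\<lambda>j. - y j) \<in> L"
  using lat_smult[OF assms, of "-1"] by simp

lemma lat_zero: "(\<lambda>j. 0) \<in> L"
  unfolding lat_iff by (rule exI[of _ "\<lambda>k. 0"]) simp

lemma lat_col: assumes "k < n" shows "colA n p q k \<in> L"
  unfolding lat_iff
proof (rule exI[of _ "\<lambda>k'. if k' = k then 1 else 0"], rule ext)
  fix j
  have "(\<Sum>k'<n. (if k' = k then 1 else 0) * colA n p q k' j) = (\<Sum>k'<n. if k' = k then colA n p q k' j else 0)"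
    by (rule sum.cong) auto
  then show "colA n p q k j = (\<Sum>k'<n. (if k' = k then 1 else 0) * colA n p q k' j)" using assms by simp
qed

lemma lat_sum: assumes "finite A" "\<And>a. a \<in> A \<Longrightarrow> f a \<in> L"
  shows "(\<lambda>j. \<Sum>a\<in>A. f a j) \<in> L"
  using assms
proof (induction A rule: finite_induct)
  case empty then show ?case using lat_zero by simp
next
  case (insert x F)
  have "(\<lambda>j. f x j + (\<Sum>a\<in>F. f a j)) \<in> L"
    by (rule lat_add) (use insert in auto)
  then show ?case using insert by simp
qed

lemma Acoord: assumes "j < n"
  shows "(\<Sum>k<n. c k * colA n p q k j) =
     (if j = 0 then int q * c 0 + int p * c (n - 1) else int q * c j - int p * c (j - 1))"
proof -
  have "(\<Sum>k<n. c k * colA n p q k j) = (\<Sum>k<n. (if k = j then int q * c k else 0)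
       + (if j \<noteq> 0 then (if k = j - 1 then - int p * c k else 0) else 0) + (if k = n - 1 \<and> j = 0 then int p * c k else 0))"
    by (rule sum.cong) (use assms in \<open>auto simp: colA_def unitv_def algebra_simps\<close>)
  also have "\<dots> = int q * c j + (if j = 0 then 0 else - int p * c (j - 1)) + (if j = 0 then int p * c (n - 1) else 0)"
    using assms n2 by (simp add: sum.distrib sum.delta' cong: if_cong)
  finally show ?thesis by auto
qed

lemma Aout: assumes "j \<ge> n" shows "(\<Sum>k<n. c k * colA n p q k j) = 0"
  by (rule sum.neutral) (use assms in \<open>auto simp: colA_def unitv_def\<close>)

lemma h1: "0 < (a::int) \<Longrightarrow> a * x < a \<Longrightarrow> x \<le> 0"
proof -
  assume "0 < a" "a * x < a"
  then have "a * x < a * 1" by simp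
  then have "x < 1" using \<open>0 < a\<close> mult_less_cancel_left_pos by blast
  then show ?thesis by simp
qed
lemma h2: "0 < (a::int) \<Longrightarrow> - a < a * x \<Longrightarrow> x \<ge> 0"
  using h1[of a "-x"] by simp
lemma h3: "0 < (a::int) \<Longrightarrow> 0 < a * x \<Longrightarrow> x \<ge> 1"
  by (simp add: zero_less_mult_iff)

lemma chain_fwd_le:
  assumes rel: "\<And>j. 0 < j \<Longrightarrow> j < n \<Longrightarrow> \<delta> j = int q * c j - int p * c (j - 1)"
    and b: "\<And>j. 0 < j \<Longrightarrow> j < n \<Longrightarrow> \<delta> j < int q" and c0: "c 0 \<le> 0"
  shows "j < n \<Longrightarrow> c j \<le> 0"
proof (induction j)
  case 0 then show ?case using c0 by simp
next
  case (Suc j)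
  then have "c j \<le> 0" by simp
  moreover have "\<delta> (Suc j) = int q * c (Suc j) - int p * c j" using rel[of "Suc j"] Suc by simp
  moreover have "\<delta> (Suc j) < int q" using b Suc by blast
  moreover have "int p * c j \<le> 0" using \<open>c j \<le> 0\<close> by (simp add: mult_nonneg_nonpos)
  ultimately have hh: "int q * c (Suc j) < int q" by linarith
  show ?case using h1[OF _ hh] qp by simp
qed

lemma chain_fwd_ge:
  assumes rel: "\<And>j. 0 < j \<Longrightarrow> j < n \<Longrightarrow> \<delta> j = int q * c j - int p * c (j - 1)"
    and b: "\<And>j. 0 < j \<Longrightarrow> j < n \<Longrightarrow> \<delta> j > - int q" and c0: "c 0 \<ge> 0"
  shows "j < n \<Longrightarrow> c j \<ge> 0"
proof (induction j)
  case 0 then show ?case using c0 by simp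
next
  case (Suc j)
  then have "c j \<ge> 0" by simp
  moreover have "\<delta> (Suc j) = int q * c (Suc j) - int p * c j" using rel[of "Suc j"] Suc by simp
  moreover have "\<delta> (Suc j) > - int q" using b Suc by blast
  moreover have "int p * c j \<ge> 0" using \<open>c j \<ge> 0\<close> by simp
  ultimately have hh: "int q * c (Suc j) > - int q" by linarith
  show ?case using h2[OF _ hh] qp by simp
qed

lemma chain_fwd_pos:
  assumes rel: "\<And>j. 0 < j \<Longrightarrow> j < n \<Longrightarrow> \<delta> j = int q * c j - int p * c (j - 1)"
    and b: "\<And>j. 0 < j \<Longrightarrow> j < n \<Longrightarrow> \<delta> j > - int p" and c0: "c 0 \<ge> 1"
  shows "j < n \<Longrightarrow> c j \<ge> 1"
proof (induction j)
  case 0 then show ?case using c0 by simp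
next
  case (Suc j)
  then have "c j \<ge> 1" by simp
  moreover have "\<delta> (Suc j) = int q * c (Suc j) - int p * c j" using rel[of "Suc j"] Suc by simp
  moreover have "\<delta> (Suc j) > - int p" using b Suc by blast
  moreover have "int p * c j \<ge> int p" using \<open>c j \<ge> 1\<close> pp by simp
  ultimately have hh: "int q * c (Suc j) > 0" by linarith
  show ?case using h3[OF _ hh] qp by simp
qed

lemma chain_bwd_le:
  assumes rel: "\<And>j. 0 < j \<Longrightarrow> j < n \<Longrightarrow> \<delta> j = int q * c j - int p * c (j - 1)"
    and b: "\<And>j. 0 < j \<Longrightarrow> j < n \<Longrightarrow> \<delta> j > - int p" and c0: "c (n - 1) \<le> 0"
  shows "m < n \<Longrightarrow> c (n - 1 - m) \<le> 0"
proof (induction m)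
  case 0 then show ?case using c0 by simp
next
  case (Suc m)
  let ?j = "n - 1 - m"
  have j: "0 < ?j" "?j < n" "?j - 1 = n - 1 - Suc m" using Suc by auto
  have "c ?j \<le> 0" using Suc by simp
  moreover have "\<delta> ?j = int q * c ?j - int p * c (n - 1 - Suc m)" using rel[OF j(1,2)] j(3) by simp
  moreover have "\<delta> ?j > - int p" using b j by blast
  moreover have "int q * c ?j \<le> 0" using \<open>c ?j \<le> 0\<close> by (simp add: mult_nonneg_nonpos)
  ultimately have hh: "int p * c (n - 1 - Suc m) < int p" by linarith
  show ?case using h1[OF _ hh] pp by simp
qed

lemma chain_bwd_ge:
  assumes rel: "\<And>j. 0 < j \<Longrightarrow> j < n \<Longrightarrow> \<delta> j = int q * c j - int p * c (j - 1)"
    and b: "\<And>j. 0 < j \<Longrightarrow> j < n \<Longrightarrow> \<delta> j < int p" and c0: "c (n - 1) \<ge> 0"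
  shows "m < n \<Longrightarrow> c (n - 1 - m) \<ge> 0"
proof (induction m)
  case 0 then show ?case using c0 by simp
next
  case (Suc m)
  let ?j = "n - 1 - m"
  have j: "0 < ?j" "?j < n" "?j - 1 = n - 1 - Suc m" using Suc by auto
  have "c ?j \<ge> 0" using Suc by simp
  moreover have "\<delta> ?j = int q * c ?j - int p * c (n - 1 - Suc m)" using rel[OF j(1,2)] j(3) by simp
  moreover have "\<delta> ?j < int p" using b j by blast
  moreover have "int q * c ?j \<ge> 0" using \<open>c ?j \<ge> 0\<close> by simp
  ultimately have hh: "int p * c (n - 1 - Suc m) > - int p" by linarith
  show ?case using h2[OF _ hh] pp by simp
qed

lemma all_bwd: "(\<And>m. m < n \<Longrightarrow> P (n - 1 - m)) \<Longrightarrow> j < n \<Longrightarrow> P j"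
proof -
  assume a: "\<And>m. m < n \<Longrightarrow> P (n - 1 - m)" and j: "j < n"
  have "n - 1 - (n - 1 - j) = j" using j by simp
  moreover have "n - 1 - j < n" using j by simp
  ultimately show ?thesis using a by metis
qed

lemma torus_bd: "y \<in> torus n s \<Longrightarrow> j < n \<Longrightarrow> 0 \<le> y j \<and> y j < s"
  by (simp add: torus_def)

lemma lat_rel: assumes "y \<in> L"
  shows "\<exists>c. (\<forall>j. 0 < j \<and> j < n \<longrightarrow> y j = int q * c j - int p * c (j - 1))
            \<and> y 0 = int q * c 0 + int p * c (n - 1) \<and> ((\<forall>k<n. c k = 0) \<longrightarrow> (\<forall>j. y j = 0))"
proof -
  obtain c where c: "y = (\<lambda>j. \<Sum>k<n. c k * colA n p q k j)" using assms lat_iff by metis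
  have "n > 0" using n2 by simp
  show ?thesis
    by (rule exI[of _ c]) (use Acoord \<open>n > 0\<close> in \<open>auto simp: c\<close>)
qed

lemma inj_a: assumes d: "d \<in> torus n (int q)" and d': "d' \<in> torus n (int q)"
  and L: "(\<lambda>j. d j - d' j) \<in> L" shows "d = d'"
proof -
  define y where "y = (\<lambda>j. d j - d' j)"
  obtain c where rel: "\<And>j. 0 < j \<Longrightarrow> j < n \<Longrightarrow> y j = int q * c j - int p * c (j - 1)"
    and r0: "y 0 = int q * c 0 + int p * c (n - 1)" and z: "(\<forall>k<n. c k = 0) \<Longrightarrow> (\<forall>j. y j = 0)"
    using lat_rel[OF L] unfolding y_def by metis
  have bu: "y j < int q" and bl: "y j > - int q" if "j < n" for j
    using torus_bd[OF d that] torus_bd[OF d' that] unfolding y_def by auto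
  have bu': "\<And>j. 0 < j \<Longrightarrow> j < n \<Longrightarrow> y j < int q" and bl': "\<And>j. 0 < j \<Longrightarrow> j < n \<Longrightarrow> y j > - int q" using bu bl by auto
  have n1: "n - 1 < n" using n2 by simp
  have c0: "c 0 = 0"
  proof (cases "c 0 \<le> 0")
    case True
    have "c (n - 1) \<le> 0" by (rule chain_fwd_le[where \<delta>=y and c=c, OF rel bu True n1]) auto
    then have "int p * c (n - 1) \<le> 0" by (simp add: mult_nonneg_nonpos)
    then have hh: "int q * c 0 > - int q" using r0 bl[of 0] n2 by simp
    show ?thesis using h2[OF _ hh] qp True by simp
  next
    case False
    then have F: "c 0 \<ge> 0" by simp
    have "c (n - 1) \<ge> 0" by (rule chain_fwd_ge[where \<delta>=y and c=c, OF rel bl F n1]) auto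
    then have "int p * c (n - 1) \<ge> 0" by simp
    then have hh: "int q * c 0 < int q" using r0 bu[of 0] n2 by simp
    show ?thesis using h1[OF _ hh] qp F by simp
  qed
  have "c k = 0" if "k < n" for k
    using chain_fwd_le[where \<delta>=y and c=c, OF rel bu' _ that] chain_fwd_ge[where \<delta>=y and c=c, OF rel bl' _ that] c0 by force
  then have "\<forall>j. y j = 0" using z by blast
  then show ?thesis unfolding y_def by auto
qed

lemma inj_b: assumes d: "d \<in> torus n (int p)" and d': "d' \<in> torus n (int p)"
  and L: "(\<lambda>j. d j - d' j) \<in> L" shows "d = d'"
proof -
  define y where "y = (\<lambda>j. d j - d' j)"
  obtain c where rel: "\<And>j. 0 < j \<Longrightarrow> j < n \<Longrightarrow> y j = int q * c j - int p * c (j - 1)"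
    and r0: "y 0 = int q * c 0 + int p * c (n - 1)" and z: "(\<forall>k<n. c k = 0) \<Longrightarrow> (\<forall>j. y j = 0)"
    using lat_rel[OF L] unfolding y_def by metis
  have bu: "y j < int p" and bl: "y j > - int p" if "j < n" for j
    using torus_bd[OF d that] torus_bd[OF d' that] unfolding y_def by auto
  have bu': "\<And>j. 0 < j \<Longrightarrow> j < n \<Longrightarrow> y j < int p" and bl': "\<And>j. 0 < j \<Longrightarrow> j < n \<Longrightarrow> y j > - int p" using bu bl by auto
  have n0: "0 < n" using n2 by simp
  have cn: "c (n - 1) = 0"
  proof (cases "c (n - 1) \<le> 0")
    case True
    have "c 0 \<le> 0" using all_bwd[where P="\<lambda>j. c j \<le> 0", OF chain_bwd_le[where \<delta>=y and c=c, OF rel bl True] n0] by auto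
    then have "int q * c 0 \<le> 0" by (simp add: mult_nonneg_nonpos)
    then have hh: "int p * c (n - 1) > - int p" using r0 bl[of 0] n2 by simp
    show ?thesis using h2[OF _ hh] pp True by simp
  next
    case False
    then have F: "c (n - 1) \<ge> 0" by simp
    have "c 0 \<ge> 0" using all_bwd[where P="\<lambda>j. c j \<ge> 0", OF chain_bwd_ge[where \<delta>=y and c=c, OF rel bu F] n0] by auto
    then have "int q * c 0 \<ge> 0" by simp
    then have hh: "int p * c (n - 1) < int p" using r0 bu[of 0] n2 by simp
    show ?thesis using h1[OF _ hh] pp F by simp
  qed
  have "c k = 0" if "k < n" for k
    using all_bwd[where P="\<lambda>j. c j \<le> 0", OF chain_bwd_le[where \<delta>=y and c=c, OF rel bl'] that]
          all_bwd[where P="\<lambda>j. c j \<ge> 0", OF chain_bwd_ge[where \<delta>=y and c=c, OF rel bu'] that] cn by force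
  then have "\<forall>j. y j = 0" using z by blast
  then show ?thesis unfolding y_def by auto
qed

lemma inj_c: assumes d: "d \<in> torus n (int q)" and e: "e \<in> torus n (int p)"
  and L: "(\<lambda>j. d j - (e j - int p * unitv 0 j)) \<in> L" shows False
proof -
  define y where "y = (\<lambda>j. d j - (e j - int p * unitv 0 j))"
  obtain c where rel: "\<And>j. 0 < j \<Longrightarrow> j < n \<Longrightarrow> y j = int q * c j - int p * c (j - 1)"
    and r0: "y 0 = int q * c 0 + int p * c (n - 1)"
    using lat_rel[OF L] unfolding y_def by metis
  have bu: "y j < int q" and bl: "y j > - int p" if "0 < j" "j < n" for j
    using torus_bd[OF d that(2)] torus_bd[OF e that(2)] that unfolding y_def unitv_def by auto
  have y0: "y 0 \<ge> 1" "y 0 < int q + int p" using torus_bd[OF d, of 0] torus_bd[OF e, of 0] n2 unfolding y_def unitv_def by auto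
  have n1: "n - 1 < n" using n2 by simp
  show False
  proof (cases "c 0 \<le> 0")
    case True
    have "c (n - 1) \<le> 0" by (rule chain_fwd_le[where \<delta>=y and c=c, OF rel bu True n1]) auto
    then have "int p * c (n - 1) \<le> 0" by (simp add: mult_nonneg_nonpos)
    moreover have "int q * c 0 \<le> 0" using True by (simp add: mult_nonneg_nonpos)
    ultimately show False using r0 y0 by simp
  next
    case False
    then have F: "c 0 \<ge> 1" by simp
    have "c (n - 1) \<ge> 1" by (rule chain_fwd_pos[where \<delta>=y and c=c, OF rel bl F n1]) auto
    then have "int p * c (n - 1) \<ge> int p" using pp by simp
    moreover have "int q * c 0 \<ge> int q" using F qp by simp
    ultimately show False using r0 y0 by simp
  qed
qed

definition phi :: "(nat \<Rightarrow> int) \<Rightarrow> int" where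
  "phi y = (\<Sum>j<n. y j * (int q ^ j * int p ^ (n - 1 - j)))"

lemma phi_diff: "phi (\<lambda>j. y j - z j) = phi y - phi z"
  unfolding phi_def by (simp add: algebra_simps sum_subtractf)

lemma phi_add: "phi (\<lambda>j. y j + z j) = phi y + phi z"
  unfolding phi_def by (simp add: algebra_simps sum.distrib)

lemma phi_smult: "phi (\<lambda>j. a * y j) = a * phi y"
  unfolding phi_def by (simp add: algebra_simps sum_distrib_left)

lemma phi_unit: assumes "i < n" shows "phi (unitv i) = int q ^ i * int p ^ (n - 1 - i)"
proof -
  have "phi (unitv i) = (\<Sum>j<n. if j = i then int q ^ j * int p ^ (n - 1 - j) else 0)"
    unfolding phi_def by (rule sum.cong) (auto simp: unitv_def)
  then show ?thesis using assms by simp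
qed

lemma phi_col: assumes k: "k < n" shows "phi (colA n p q k) = (if k + 1 < n then 0 else NN)"
proof (cases "k + 1 < n")
  case True
  have "colA n p q k = (\<lambda>j. int q * unitv k j - int p * unitv (k+1) j)" using True by (simp add: colA_def)
  then have "phi (colA n p q k) = int q * phi (unitv k) - int p * phi (unitv (k+1))"
    by (simp add: phi_diff phi_smult)
  also have "\<dots> = int q * (int q ^ k * int p ^ (n - 1 - k)) - int p * (int q ^ (k+1) * int p ^ (n - 1 - (k+1)))"
    using True by (simp add: phi_unit)
  also have "\<dots> = 0"
  proof -
    have "n - 1 - k = Suc (n - 1 - (k+1))" using True by simp
    then show ?thesis by (simp add: algebra_simps)
  qed
  finally show ?thesis using True by simp
next
  case False
  then have kk: "k = n - 1" using k by simp
  have "colA n p q k = (\<lambda>j. int q * unitv k j + int p * unitv 0 j)" using False by (simp add: colA_def)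
  then have "phi (colA n p q k) = int q * phi (unitv k) + int p * phi (unitv 0)"
    by (simp add: phi_add phi_smult)
  also have "\<dots> = int q * (int q ^ (n - 1)) + int p * (int p ^ (n - 1))"
    using kk n2 by (simp add: phi_unit)
  also have "\<dots> = NN"
  proof -
    have "n = Suc (n - 1)" using n2 by simp
    then have "int q ^ n = int q * int q ^ (n - 1)" "int p ^ n = int p * int p ^ (n - 1)"
      by (metis power_Suc)+
    then show ?thesis by simp
  qed
  finally show ?thesis using False by simp
qed

lemma phi_L: assumes "y \<in> L" shows "NN dvd phi y"
proof -
  obtain c where c: "y = (\<lambda>j. \<Sum>k<n. c k * colA n p q k j)" using assms lat_iff by metis
  have "phi y = (\<Sum>j<n. \<Sum>k<n. c k * colA n p q k j * (int q ^ j * int p ^ (n - 1 - j)))"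
    unfolding c phi_def by (simp add: sum_distrib_right)
  also have "\<dots> = (\<Sum>k<n. \<Sum>j<n. c k * colA n p q k j * (int q ^ j * int p ^ (n - 1 - j)))"
    by (rule sum.swap)
  also have "\<dots> = (\<Sum>k<n. c k * phi (colA n p q k))"
    unfolding phi_def by (simp add: sum_distrib_left mult.assoc)
  also have "\<dots> = (\<Sum>k<n. c k * (if k + 1 < n then 0 else NN))"
    by (rule sum.cong) (auto simp: phi_col)
  finally show ?thesis by (simp add: dvd_sum)
qed

lemma lat_eq: "y \<in> L \<Longrightarrow> (\<And>j. y j = z j) \<Longrightarrow> z \<in> L"
proof -
  assume "y \<in> L" "\<And>j. y j = z j"
  then have "y = z" by auto
  then show "z \<in> L" using \<open>y \<in> L\<close> by simp
qed

lemma chainL: "k + m < n \<Longrightarrow> (\<lambda>j. int q ^ m * unitv k j - int p ^ m * unitv (k + m) j) \<in> L"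
proof (induction m)
  case 0 then show ?case using lat_zero by simp
next
  case (Suc m)
  then have IH: "(\<lambda>j. int q ^ m * unitv k j - int p ^ m * unitv (k + m) j) \<in> L" by simp
  have col: "colA n p q (k + m) = (\<lambda>j. int q * unitv (k + m) j - int p * unitv (k + m + 1) j)"
    using Suc by (simp add: colA_def)
  have "(\<lambda>j. int q * (int q ^ m * unitv k j - int p ^ m * unitv (k + m) j) + int p ^ m * colA n p q (k + m) j) \<in> L"
    by (rule lat_add[OF lat_smult[OF IH] lat_smult[OF lat_col]]) (use Suc in simp)
  then show ?case
    by (rule lat_eq) (simp add: col algebra_simps)
qed

lemma NeL: assumes i: "i < n" shows "(\<lambda>j. NN * unitv i j) \<in> L"
proof -
  have A1: "(\<lambda>j. int q ^ (n-1-i) * unitv i j - int p ^ (n-1-i) * unitv (n - 1) j) \<in> L"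
    using chainL[of i "n-1-i"] i by simp
  have A2: "colA n p q (n-1) \<in> L" using lat_col n2 by simp
  have c2: "colA n p q (n-1) = (\<lambda>j. int q * unitv (n-1) j + int p * unitv 0 j)"
    using n2 by (simp add: colA_def)
  have A3: "(\<lambda>j. int q ^ i * unitv 0 j - int p ^ i * unitv i j) \<in> L"
    using chainL[of 0 i] i by simp
  have S: "(\<lambda>j. int q ^ (i+1) * (int q ^ (n-1-i) * unitv i j - int p ^ (n-1-i) * unitv (n - 1) j)
      + int q ^ i * int p ^ (n-1-i) * colA n p q (n-1) j
      - int p ^ (n - i) * (int q ^ i * unitv 0 j - int p ^ i * unitv i j)) \<in> L"
    by (rule lat_diff[OF lat_add[OF lat_smult[OF A1] lat_smult[OF A2]] lat_smult[OF A3]])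
  have e1: "int q ^ n = int q ^ i * int q * int q ^ (n-1-i)"
  proof -
    have "n = i + 1 + (n-1-i)" using i by simp
    then show ?thesis by (metis power_add power_one_right)
  qed
  have e2: "int p ^ n = int p ^ (n - i) * int p ^ i"
  proof -
    have "n = (n - i) + i" using i by simp
    then show ?thesis by (metis power_add)
  qed
  have e3: "int p ^ (n - i) = int p ^ (n-1-i) * int p"
  proof -
    have "n - i = Suc (n-1-i)" using i by simp
    then show ?thesis by (metis power_Suc2)
  qed
  show ?thesis
    by (rule lat_eq[OF S]) (simp only: c2, simp add: e1 e2 e3 algebra_simps)
qed

lemma vec_decomp: assumes "y \<in> V" shows "y j = (\<Sum>k<n. y k * unitv k j)"
proof -
  have "(\<Sum>k<n. y k * unitv k j) = (\<Sum>k<n. if k = j then y k else 0)"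
    by (rule sum.cong) (auto simp: unitv_def)
  then show ?thesis using assms by auto
qed

lemma divN: assumes y: "y \<in> V" and dv: "\<And>j. j < n \<Longrightarrow> NN dvd y j" shows "y \<in> L"
proof -
  have m: "(\<lambda>j. (y k div NN) * (NN * unitv k j)) \<in> L" if "k \<in> {..<n}" for k
    using lat_smult[OF NeL] that by simp
  have "(\<lambda>j. \<Sum>k\<in>{..<n}. (y k div NN) * (NN * unitv k j)) \<in> L"
    using lat_sum[of "{..<n}" "\<lambda>k j. (y k div NN) * (NN * unitv k j)"] m by simp
  then show ?thesis
  proof (rule lat_eq)
    fix j
    have "(\<Sum>k<n. y k div NN * (NN * unitv k j)) = (\<Sum>k<n. y k * unitv k j)"
    proof (rule sum.cong)
      fix k assume "k \<in> {..<n}"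
      then have "y k div NN * NN = y k" using dv by simp
      then show "y k div NN * (NN * unitv k j) = y k * unitv k j" by (metis mult.assoc)
    qed simp
    then show "(\<Sum>k\<in>{..<n}. y k div NN * (NN * unitv k j)) = y j"
      using vec_decomp[OF y, of j] by metis
  qed
qed

lemma cop_q: "coprime (int q) NN"
proof -
  have c1: "coprime (int q) (int p ^ n)" using cop by (simp add: coprime_commute)
  have "n = Suc (n - 1)" using n2 by simp
  then have e: "NN = int q ^ (n - 1) * int q + int p ^ n" by (metis add.commute power_Suc2)
  have "gcd (int q) (int q ^ (n - 1) * int q + int p ^ n) = gcd (int q) (int p ^ n)" by (rule gcd_add_mult)
  then have "gcd (int q) NN = gcd (int q) (int p ^ n)" by (simp only: e)
  then show ?thesis using c1 by (simp add: coprime_iff_gcd_eq_1)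
qed

lemma cop_p: "coprime (int p) NN"
proof -
  have c1: "coprime (int p) (int q ^ n)" using cop by simp
  have "n = Suc (n - 1)" using n2 by simp
  then have e: "NN = int p ^ (n - 1) * int p + int q ^ n" by (metis power_Suc2)
  have "gcd (int p) (int p ^ (n - 1) * int p + int q ^ n) = gcd (int p) (int q ^ n)" by (rule gcd_add_mult)
  then have "gcd (int p) NN = gcd (int p) (int q ^ n)" by (simp only: e)
  then show ?thesis using c1 by (simp add: coprime_iff_gcd_eq_1)
qed

lemma ringid: assumes h: "(a::int) * b = 1 + N * t" "c = a * d"
  shows "a * (b * x - d * y) - t * (N * x) = x - c * y"
proof -
  have "a * (b * x - d * y) - t * (N * x) = (a * b) * x - (a * d) * y - t * N * x" by (simp add: algebra_simps)
  also have "\<dots> = (1 + N * t) * x - c * y - t * N * x" using h by simp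
  also have "\<dots> = x - c * y" by (simp add: algebra_simps)
  finally show ?thesis .
qed

lemma ringid2: assumes "(z::int) = N * t" shows "(y - z * U) + t * (N * U) = y"
  using assms by (simp add: algebra_simps)

lemma sumid: "(\<Sum>k\<in>A. (f k::int) * (g k - c k * U)) = (\<Sum>k\<in>A. f k * g k) - (\<Sum>k\<in>A. f k * c k) * U"
  by (simp add: right_diff_distrib sum_subtractf sum_distrib_right mult.assoc)

lemma ker_sub: assumes y: "y \<in> V" and dv: "NN dvd phi y" shows "y \<in> L"
proof -
  obtain u where u: "[int q * u = 1] (mod NN)" using cong_solve_coprime_int[OF cop_q] by blast
  have ek: "(\<lambda>j. unitv k j - (u * int p) ^ (n - 1 - k) * unitv (n - 1) j) \<in> L" if k: "k < n" for k
  proof -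
    define m where "m = n - 1 - k"
    have km: "k + m = n - 1" using k unfolding m_def by simp
    have B: "(\<lambda>j. int q ^ m * unitv k j - int p ^ m * unitv (n - 1) j) \<in> L"
      using chainL[of k m] km n2 by simp
    have "[(int q * u) ^ m = 1 ^ m] (mod NN)" by (rule cong_pow[OF u])
    then have "NN dvd (int q * u) ^ m - 1" by (simp add: cong_iff_dvd_diff)
    then obtain t where t: "(int q * u) ^ m - 1 = NN * t" by (auto elim: dvdE)
    have S: "(\<lambda>j. u ^ m * (int q ^ m * unitv k j - int p ^ m * unitv (n - 1) j) - t * (NN * unitv k j)) \<in> L"
      by (rule lat_diff[OF lat_smult[OF B] lat_smult[OF NeL[OF k]]])
    show ?thesis
    proof (rule lat_eq[OF S])
      fix j
      have "(int q * u) ^ m = 1 + NN * t" using t by simp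
      then have "u ^ m * int q ^ m = 1 + NN * t" by (simp add: power_mult_distrib mult.commute)
      moreover have "(u * int p) ^ m = u ^ m * int p ^ m" by (simp add: power_mult_distrib)
      ultimately show "u ^ m * (int q ^ m * unitv k j - int p ^ m * unitv (n - 1) j) - t * (NN * unitv k j)
          = unitv k j - (u * int p) ^ (n - 1 - k) * unitv (n - 1) j"
        unfolding m_def[symmetric] by (rule ringid)
    qed
  qed
  define z where "z = (\<Sum>k<n. y k * (u * int p) ^ (n - 1 - k))"
  have "(\<lambda>j. \<Sum>k\<in>{..<n}. y k * (unitv k j - (u * int p) ^ (n - 1 - k) * unitv (n - 1) j)) \<in> L"
    using lat_sum[of "{..<n}" "\<lambda>k j. y k * (unitv k j - (u * int p) ^ (n - 1 - k) * unitv (n - 1) j)"]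
      lat_smult[OF ek] by simp
  then have W: "(\<lambda>j. y j - z * unitv (n - 1) j) \<in> L"
  proof (rule lat_eq)
    fix j
    have "(\<Sum>k\<in>{..<n}. y k * (unitv k j - (u * int p) ^ (n - 1 - k) * unitv (n - 1) j))
        = (\<Sum>k<n. y k * unitv k j) - (\<Sum>k<n. y k * (u * int p) ^ (n - 1 - k)) * unitv (n - 1) j"
      by (rule sumid)
    then show "(\<Sum>k\<in>{..<n}. y k * (unitv k j - (u * int p) ^ (n - 1 - k) * unitv (n - 1) j)) = y j - z * unitv (n - 1) j"
      using vec_decomp[OF y, of j] unfolding z_def by metis
  qed
  have "phi (\<lambda>j. y j - z * unitv (n - 1) j) = phi y - z * phi (unitv (n - 1))"
    using phi_diff[of y "\<lambda>j. z * unitv (n - 1) j"] phi_smult[of z "unitv (n - 1)"] by simp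
  also have "\<dots> = phi y - z * int q ^ (n - 1)" using n2 by (simp add: phi_unit)
  finally have d1: "NN dvd phi y - z * int q ^ (n - 1)" using phi_L[OF W] by simp
  have "NN dvd phi y - (phi y - z * int q ^ (n - 1))" using dvd_diff[OF dv d1] .
  then have "NN dvd z * int q ^ (n - 1)" by simp
  moreover have "coprime NN (int q ^ (n - 1))" using cop_q by (simp add: coprime_commute)
  ultimately have "NN dvd z" by (simp add: coprime_dvd_mult_left_iff)
  then obtain t where zt: "z = NN * t" by (auto elim: dvdE)
  have Z: "(\<lambda>j. t * (NN * unitv (n - 1) j)) \<in> L" using lat_smult[OF NeL] n2 by simp
  have "(\<lambda>j. (y j - z * unitv (n - 1) j) + t * (NN * unitv (n - 1) j)) \<in> L"
    by (rule lat_add[OF W Z])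
  then show ?thesis by (rule lat_eq) (rule ringid2[OF zt])
qed

abbreviation "Pset \<equiv> (\<lambda>e j. e j - int p * unitv 0 j) ` torus n (int p)"

lemma cover: assumes y: "y \<in> V"
  shows "(\<exists>d\<in>torus n (int q). (\<lambda>j. y j - d j) \<in> L) \<or> (\<exists>e\<in>torus n (int p). (\<lambda>j. y j - (e j - int p * unitv 0 j)) \<in> L)"
proof -
  define F where "F = torus n (int q) \<union> Pset"
  define g where "g d = phi d mod NN" for d
  have "int p ^ n > 0" "int q ^ n > 0" using pp qp by simp_all
  then have NNpos: "NN > 0" by linarith
  have FV: "d \<in> V" if "d \<in> F" for d
    using that n2 unfolding F_def torus_def unitv_def by auto
  have key: "d1 = d2" if d1: "d1 \<in> F" and d2: "d2 \<in> F" and L12: "(\<lambda>j. d1 j - d2 j) \<in> L" for d1 d2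
  proof -
    have neg: "(\<lambda>j. d2 j - d1 j) \<in> L" using lat_neg[OF L12] by simp
    show ?thesis
    proof (cases "d1 \<in> torus n (int q)")
      case q1: True
      show ?thesis
      proof (cases "d2 \<in> torus n (int q)")
        case True show ?thesis using inj_a[OF q1 True L12] by simp
      next
        case False
        then obtain e2 where e2: "e2 \<in> torus n (int p)" "d2 = (\<lambda>j. e2 j - int p * unitv 0 j)"
          using d2 unfolding F_def by auto
        show ?thesis using inj_c[OF q1 e2(1)] L12 e2(2) by simp
      qed
    next
      case False
      then obtain e1 where e1: "e1 \<in> torus n (int p)" "d1 = (\<lambda>j. e1 j - int p * unitv 0 j)"
        using d1 unfolding F_def by auto
      show ?thesis
      proof (cases "d2 \<in> torus n (int q)")
        case True then show ?thesis using inj_c[OF True e1(1)] neg e1(2) by simp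
      next
        case False
        then obtain e2 where e2: "e2 \<in> torus n (int p)" "d2 = (\<lambda>j. e2 j - int p * unitv 0 j)"
          using d2 unfolding F_def by auto
        have "(\<lambda>j. e1 j - e2 j) \<in> L" using L12 e1(2) e2(2) by simp
        then have "e1 = e2" using inj_b[OF e1(1) e2(1)] by simp
        then show ?thesis using e1 e2 by simp
      qed
    qed
  qed
  have inj: "inj_on g F"
  proof (rule inj_onI)
    fix d1 d2 assume d1: "d1 \<in> F" and d2: "d2 \<in> F" and e: "g d1 = g d2"
    then have "NN dvd phi d1 - phi d2" unfolding g_def by (simp add: mod_eq_dvd_iff)
    then have "NN dvd phi (\<lambda>j. d1 j - d2 j)" by (simp add: phi_diff)
    moreover have "(\<lambda>j. d1 j - d2 j) \<in> V" using FV[OF d1] FV[OF d2] by simp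
    ultimately have "(\<lambda>j. d1 j - d2 j) \<in> L" by (rule ker_sub[rotated])
    then show "d1 = d2" by (rule key[OF d1 d2])
  qed
  have disj: "torus n (int q) \<inter> Pset = {}"
  proof -
    have "d 0 \<ge> 0" if "d \<in> torus n (int q)" for d using that n2 unfolding torus_def by auto
    moreover have "d 0 < 0" if "d \<in> Pset" for d using that n2 unfolding torus_def unitv_def by auto
    ultimately show ?thesis by fastforce
  qed
  have cP: "card Pset = p ^ n"
  proof -
    have "inj_on (\<lambda>e j. e j - int p * unitv 0 j) (torus n (int p))"
    proof (rule inj_onI)
      fix a b assume "(\<lambda>j. a j - int p * unitv 0 j) = (\<lambda>j. b j - int p * unitv 0 j)"
      then show "a = b" by (metis (no_types) add_diff_cancel_right' diff_add_cancel ext)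
    qed
    then show ?thesis using card_torus[of "int p" n] by (simp add: card_image)
  qed
  have finF: "finite F" unfolding F_def using finite_torus pp qp by simp
  have cF: "card F = nat NN"
  proof -
    have "card F = card (torus n (int q)) + card Pset"
      unfolding F_def by (rule card_Un_disjoint) (use finite_torus pp qp disj in auto)
    also have "\<dots> = q ^ n + p ^ n" using card_torus[of "int q" n] cP by simp
    finally show ?thesis by (simp add: nat_add_distrib nat_power_eq)
  qed
  have sub: "g ` F \<subseteq> {0..<NN}" unfolding g_def using NNpos by auto
  have "card (g ` F) = card {0..<NN}" using card_image[OF inj] cF by simp
  then have gF: "g ` F = {0..<NN}" using card_subset_eq[OF _ sub] by simp
  have "g y \<in> {0..<NN}" unfolding g_def using NNpos by simp
  then obtain d where d: "d \<in> F" "g d = g y" using gF by (metis imageE)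
  then have "phi y mod NN = phi d mod NN" unfolding g_def by simp
  then have "NN dvd phi y - phi d" by (simp only: mod_eq_dvd_iff)
  then have "NN dvd phi (\<lambda>j. y j - d j)" by (simp add: phi_diff)
  moreover have "(\<lambda>j. y j - d j) \<in> V" using FV[OF d(1)] y by simp
  ultimately have yd: "(\<lambda>j. y j - d j) \<in> L" by (rule ker_sub[rotated])
  show ?thesis
  proof (cases "d \<in> torus n (int q)")
    case True then show ?thesis using yd by blast
  next
    case False
    then obtain e where "e \<in> torus n (int p)" "d = (\<lambda>j. e j - int p * unitv 0 j)"
      using d(1) unfolding F_def by auto
    then show ?thesis using yd by auto
  qed
qed

lemma NNpos: "NN > 0"
proof -
  have "int p ^ n > 0" "int q ^ n > 0" using pp qp by simp_all
  then show ?thesis by linarith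
qed

lemma dvd_l: assumes i: "i < n" and m: "(\<lambda>j. a * unitv i j) \<in> L" shows "NN dvd a"
proof -
  have "NN dvd phi (\<lambda>j. a * unitv i j)" using phi_L[OF m] .
  then have "NN dvd a * (int q ^ i * int p ^ (n - 1 - i))"
    using phi_smult[of a "unitv i"] phi_unit[OF i] by simp
  moreover have "coprime NN (int q ^ i * int p ^ (n - 1 - i))"
    using cop_q cop_p by (simp add: coprime_commute)
  ultimately show ?thesis by (simp add: coprime_dvd_mult_left_iff)
qed

lemma least: assumes i: "i < n"
  shows "(LEAST l::nat. l \<ge> 1 \<and> (\<lambda>j. int l * unitv i j) \<in> L) = p ^ n + q ^ n"
proof (rule Least_equality)
  have "int (p ^ n + q ^ n) = NN" by simp
  moreover have "p ^ n + q ^ n \<ge> 1" using qp by (simp add: Suc_leI)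
  ultimately show "1 \<le> p ^ n + q ^ n \<and> (\<lambda>j. int (p ^ n + q ^ n) * unitv i j) \<in> L"
    using NeL[OF i] by simp
next
  fix l :: nat assume l: "1 \<le> l \<and> (\<lambda>j. int l * unitv i j) \<in> L"
  then have "NN dvd int l" using dvd_l[OF i] by blast
  then have "int (p ^ n + q ^ n) dvd int l" by simp
  then have "p ^ n + q ^ n dvd l" by (simp only: of_nat_dvd_iff)
  then show "p ^ n + q ^ n \<le> l" using l by (simp add: dvd_imp_le)
qed

definition red :: "(nat \<Rightarrow> int) \<Rightarrow> nat \<Rightarrow> int" where
  "red v = (\<lambda>j. if j < n then v j mod NN else 0)"

lemma red_torus: "red v \<in> torus n NN"
  unfolding red_def torus_def using NNpos by auto

lemma red_L: assumes "v \<in> V" shows "(\<lambda>j. v j - red v j) \<in> L"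
proof (rule divN)
  show "(\<lambda>j. v j - red v j) \<in> V" using assms unfolding red_def by auto
  fix j assume "j < n"
  then show "NN dvd v j - red v j" unfolding red_def by (simp add: mod_eq_dvd_iff[of "v j" NN "v j mod NN", simplified])
qed

lemma modN_L: assumes "x \<in> V" "x' \<in> V" "\<And>j. j < n \<Longrightarrow> x j mod NN = x' j mod NN"
  shows "(\<lambda>j. x j - x' j) \<in> L"
proof (rule divN)
  show "(\<lambda>j. x j - x' j) \<in> V" using assms by auto
  fix j assume "j < n"
  then show "NN dvd x j - x' j" using assms(3) by (simp add: mod_eq_dvd_iff)
qed

lemma torus_V: "y \<in> torus n s \<Longrightarrow> y \<in> V" unfolding torus_def by auto

definition T :: "((nat \<Rightarrow> int) \<times> nat) set" where
  "T = {(x, q) | x. x \<in> torus n NN \<and> x \<in> L} \<union> {(x, p) | x. x \<in> torus n NN \<and> (\<lambda>j. x j + int p * unitv 0 j) \<in> L}"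

lemma T_iff: "(x, s) \<in> T \<longleftrightarrow> x \<in> torus n NN \<and> ((s = q \<and> x \<in> L) \<or> (s = p \<and> (\<lambda>j. x j + int p * unitv 0 j) \<in> L))"
  unfolding T_def by auto

lemma cube_iff: "y \<in> cube n NN x s \<longleftrightarrow> (\<exists>d. y = (\<lambda>j. if j < n then (x j + d j) mod NN else 0) \<and> (\<forall>j<n. 0 \<le> d j \<and> d j < int s))"
  unfolding cube_def by blast

lemma in_cube: assumes y: "y \<in> torus n NN" and d: "d \<in> torus n (int s)"
  and e: "\<And>j. j < n \<Longrightarrow> (x j + d j) mod NN = y j mod NN"
  shows "y \<in> cube n NN x s"
  unfolding cube_iff
proof (intro exI conjI)
  show "y = (\<lambda>j. if j < n then (x j + d j) mod NN else 0)"
  proof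
    fix j show "y j = (if j < n then (x j + d j) mod NN else 0)"
      using y e[of j] unfolding torus_def by auto
  qed
  show "\<forall>j<n. 0 \<le> d j \<and> d j < int s" using d unfolding torus_def by auto
qed

lemma exist_tile: assumes y: "y \<in> torus n NN" shows "\<exists>t. t \<in> T \<and> y \<in> cube n NN (fst t) (snd t)"
proof -
  have yV: "y \<in> V" using torus_V[OF y] .
  from cover[OF yV] show ?thesis
  proof
    assume "\<exists>d\<in>torus n (int q). (\<lambda>j. y j - d j) \<in> L"
    then obtain d where d: "d \<in> torus n (int q)" and v: "(\<lambda>j. y j - d j) \<in> L" by blast
    define v where "v = (\<lambda>j. y j - d j)"
    have vV: "v \<in> V" using yV torus_V[OF d] unfolding v_def by auto
    have "(\<lambda>j. v j - (v j - red v j)) \<in> L" using lat_diff[OF v[folded v_def] red_L[OF vV]] .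
    then have xL: "red v \<in> L" by (rule lat_eq) simp
    have "(red v, q) \<in> T" using xL red_torus by (simp add: T_iff)
    moreover have "y \<in> cube n NN (red v) q"
    proof (rule in_cube[OF y d])
      fix j assume "j < n"
      then show "(red v j + d j) mod NN = y j mod NN" unfolding red_def v_def by (simp add: mod_add_left_eq)
    qed
    ultimately show ?thesis by force
  next
    assume "\<exists>e\<in>torus n (int p). (\<lambda>j. y j - (e j - int p * unitv 0 j)) \<in> L"
    then obtain e where e: "e \<in> torus n (int p)" and v: "(\<lambda>j. y j - (e j - int p * unitv 0 j)) \<in> L" by blast
    define v where "v = (\<lambda>j. y j - (e j - int p * unitv 0 j) - int p * unitv 0 j)"
    have vV: "v \<in> V" using yV torus_V[OF e] n2 unfolding v_def unitv_def by auto
    have "(\<lambda>j. (y j - (e j - int p * unitv 0 j)) - (v j - red v j)) \<in> L" using lat_diff[OF v red_L[OF vV]] .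
    then have xL: "(\<lambda>j. red v j + int p * unitv 0 j) \<in> L" by (rule lat_eq) (simp add: v_def)
    have "(red v, p) \<in> T" using xL red_torus by (simp add: T_iff)
    moreover have "y \<in> cube n NN (red v) p"
    proof (rule in_cube[OF y e])
      fix j assume "j < n"
      then show "(red v j + e j) mod NN = y j mod NN" unfolding red_def v_def by (simp add: mod_add_left_eq)
    qed
    ultimately show ?thesis by force
  qed
qed

lemma uniq_tile: assumes t1: "(x, s) \<in> T" and t2: "(x', s') \<in> T"
  and c1: "y \<in> cube n NN x s" and c2: "y \<in> cube n NN x' s'"
  shows "x = x' \<and> s = s'"
proof -
  obtain d where yd: "y = (\<lambda>j. if j < n then (x j + d j) mod NN else 0)" and db: "\<forall>j<n. 0 \<le> d j \<and> d j < int s"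
    using c1 unfolding cube_iff by blast
  obtain d' where yd': "y = (\<lambda>j. if j < n then (x' j + d' j) mod NN else 0)" and db': "\<forall>j<n. 0 \<le> d' j \<and> d' j < int s'"
    using c2 unfolding cube_iff by blast
  define d0 where "d0 = (\<lambda>j. if j < n then d j else 0)"
  define d0' where "d0' = (\<lambda>j. if j < n then d' j else 0)"
  have d0t: "d0 \<in> torus n (int s)" using db unfolding d0_def torus_def by auto
  have d0t': "d0' \<in> torus n (int s')" using db' unfolding d0'_def torus_def by auto
  have xt: "x \<in> torus n NN" and xt': "x' \<in> torus n NN" using t1 t2 by (simp_all add: T_iff)
  have eqm: "(x j + d0 j) mod NN = (x' j + d0' j) mod NN" if "j < n" for j
    using fun_cong[OF yd, of j] fun_cong[OF yd', of j] that unfolding d0_def d0'_def by simp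
  have W: "(\<lambda>j. (x j + d0 j) - (x' j + d0' j)) \<in> L"
    by (rule modN_L) (use eqm torus_V[OF xt] torus_V[OF xt'] torus_V[OF d0t] torus_V[OF d0t'] in auto)
  have xx: "x = x'" if "d0 = d0'"
  proof
    fix j show "x j = x' j"
    proof (cases "j < n")
      case True
      have "[x j + d0 j = x' j + d0 j] (mod NN)" using eqm[OF True] that unfolding cong_def by simp
      then have "[x j = x' j] (mod NN)" by (simp add: cong_add_rcancel)
      then have "x j mod NN = x' j mod NN" unfolding cong_def .
      moreover have "x j mod NN = x j" "x' j mod NN = x' j"
        using torus_bd[OF xt True] torus_bd[OF xt' True] by simp_all
      ultimately show ?thesis by simp
    next
      case False then show ?thesis using xt xt' unfolding torus_def by auto
    qed
  qed
  have Lx: "x \<in> L \<or> (\<lambda>j. x j + int p * unitv 0 j) \<in> L" using t1 by (auto simp: T_iff)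
  show ?thesis
  proof (cases "s = q \<and> x \<in> L")
    case A: True
    show ?thesis
    proof (cases "s' = q \<and> x' \<in> L")
      case B: True
      have "(\<lambda>j. ((x j + d0 j) - (x' j + d0' j)) - (x j - x' j)) \<in> L"
        using lat_diff[OF W lat_diff[of x x']] A B by simp
      then have "(\<lambda>j. d0 j - d0' j) \<in> L" by (rule lat_eq) simp
      then have "d0 = d0'" using inj_a d0t d0t' A B by simp
      then show ?thesis using xx A B by simp
    next
      case B: False
      then have B: "s' = p" "(\<lambda>j. x' j + int p * unitv 0 j) \<in> L" using t2 by (auto simp: T_iff)
      have "(\<lambda>j. (((x j + d0 j) - (x' j + d0' j)) - x j) + (x' j + int p * unitv 0 j)) \<in> L"
        using lat_add[OF lat_diff[OF W] B(2), of x] A by simp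
      then have LL: "(\<lambda>j. d0 j - (d0' j - int p * unitv 0 j)) \<in> L" by (rule lat_eq) simp
      have "d0 \<in> torus n (int q)" "d0' \<in> torus n (int p)" using d0t d0t' A B by simp_all
      from inj_c[OF this LL] show ?thesis ..
    qed
  next
    case A: False
    then have A: "s = p" "(\<lambda>j. x j + int p * unitv 0 j) \<in> L" using t1 by (auto simp: T_iff)
    show ?thesis
    proof (cases "s' = q \<and> x' \<in> L")
      case B: True
      have "(\<lambda>j. (- ((x j + d0 j) - (x' j + d0' j)) - x' j) + (x j + int p * unitv 0 j)) \<in> L"
        using lat_add[OF lat_diff[OF lat_neg[OF W]] A(2), of x'] B by simp
      then have LL: "(\<lambda>j. d0' j - (d0 j - int p * unitv 0 j)) \<in> L" by (rule lat_eq) simp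
      have "d0' \<in> torus n (int q)" "d0 \<in> torus n (int p)" using d0t d0t' A B by simp_all
      from inj_c[OF this LL] show ?thesis ..
    next
      case B: False
      then have B: "s' = p" "(\<lambda>j. x' j + int p * unitv 0 j) \<in> L" using t2 by (auto simp: T_iff)
      have "(\<lambda>j. ((x j + d0 j) - (x' j + d0' j)) - ((x j + int p * unitv 0 j) - (x' j + int p * unitv 0 j))) \<in> L"
        using lat_diff[OF W lat_diff[OF A(2) B(2)]] by simp
      then have "(\<lambda>j. d0 j - d0' j) \<in> L" by (rule lat_eq) simp
      then have "d0 = d0'" using inj_b d0t d0t' A B by simp
      then show ?thesis using xx A B by simp
    qed
  qed
qed

lemma tiling: "is_tiling n NN T"
  unfolding is_tiling_def
proof
  fix y assume y: "y \<in> torus n NN"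
  obtain t where t: "t \<in> T" "y \<in> cube n NN (fst t) (snd t)" using exist_tile[OF y] by blast
  show "\<exists>!t. t \<in> T \<and> y \<in> cube n NN (fst t) (snd t)"
  proof (rule ex1I[of _ t])
    show "t \<in> T \<and> y \<in> cube n NN (fst t) (snd t)" using t by simp
  next
    fix t' assume t': "t' \<in> T \<and> y \<in> cube n NN (fst t') (snd t')"
    have "fst t' = fst t \<and> snd t' = snd t"
      by (rule uniq_tile[of "fst t'" "snd t'" "fst t" "snd t"]) (use t t' in auto)
    then show "t' = t" by (simp add: prod_eq_iff)
  qed
qed

lemma s_lt: assumes "s \<in> {p, q}" shows "int s < NN"
proof -
  have "p \<le> p ^ n" using pp n2 by (simp add: self_le_power)
  moreover have "q \<le> q ^ n" using qp n2 by (simp add: self_le_power)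
  moreover have "p ^ n > 0" "q ^ n > 0" using pp qp by simp_all
  ultimately have "s < p ^ n + q ^ n" using assms by auto
  then have "int s < int (p ^ n + q ^ n)" by linarith
  then show ?thesis by simp
qed

lemma unil: assumes pq: "p \<noteq> q" shows "unilateral n NN T"
  unfolding unilateral_def
proof
  assume "\<exists>x x' s. (x, s) \<in> T \<and> (x', s) \<in> T \<and> (x, s) \<noteq> (x', s) \<and>
          (\<exists>i<n. (\<forall>j<n. [x' j - x j = int s * unitv i j] (mod NN)) \<or>
                 (\<forall>j<n. [x' j - x j = - (int s * unitv i j)] (mod NN)))"
  then obtain x x' s i where t1: "(x, s) \<in> T" and t2: "(x', s) \<in> T" and i: "i < n"
    and cg: "(\<forall>j<n. [x' j - x j = int s * unitv i j] (mod NN)) \<or>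
                 (\<forall>j<n. [x' j - x j = - (int s * unitv i j)] (mod NN))" by blast
  have xt: "x \<in> torus n NN" and xt': "x' \<in> torus n NN" using t1 t2 by (simp_all add: T_iff)
  have sp: "s \<in> {p, q}" using t1 by (auto simp: T_iff)
  have D: "(\<lambda>j. x' j - x j) \<in> L"
  proof (cases "s = q")
    case True
    then have "x \<in> L" "x' \<in> L" using t1 t2 pq by (auto simp: T_iff)
    then show ?thesis by (rule lat_diff[rotated])
  next
    case False
    then have "(\<lambda>j. x j + int p * unitv 0 j) \<in> L" "(\<lambda>j. x' j + int p * unitv 0 j) \<in> L"
      using t1 t2 by (auto simp: T_iff)
    from lat_diff[OF this(2) this(1)] show ?thesis by (rule lat_eq) simp
  qed
  have uV: "unitv i j = 0" if "j \<ge> n" for j using i that unfolding unitv_def by auto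
  have "(\<lambda>j. int s * unitv i j) \<in> L"
    using cg
  proof
    assume c: "\<forall>j<n. [x' j - x j = int s * unitv i j] (mod NN)"
    have Z: "(\<lambda>j. (x' j - x j) - int s * unitv i j) \<in> L"
    proof (rule divN)
      show "(\<lambda>j. (x' j - x j) - int s * unitv i j) \<in> V" using torus_V[OF xt] torus_V[OF xt'] uV by auto
      fix j assume "j < n" then show "NN dvd (x' j - x j) - int s * unitv i j" using c by (simp add: cong_iff_dvd_diff)
    qed
    from lat_diff[OF D Z] show ?thesis by (rule lat_eq) simp
  next
    assume c: "\<forall>j<n. [x' j - x j = - (int s * unitv i j)] (mod NN)"
    have Z: "(\<lambda>j. (x' j - x j) - - (int s * unitv i j)) \<in> L"
    proof (rule divN)
      show "(\<lambda>j. (x' j - x j) - - (int s * unitv i j)) \<in> V" using torus_V[OF xt] torus_V[OF xt'] uV by auto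
      fix j assume "j < n" then show "NN dvd (x' j - x j) - - (int s * unitv i j)" using c by (simp only: cong_iff_dvd_diff)
    qed
    from lat_diff[OF Z D] show ?thesis by (rule lat_eq) simp
  qed
  then have "NN dvd int s" by (rule dvd_l[OF i])
  moreover have "int s > 0" using sp pp qp by auto
  ultimately have "NN \<le> int s" by (simp add: zdvd_imp_le)
  then show False using s_lt[OF sp] by simp
qed

end

theorem theorem4:
  fixes n p q :: nat
  assumes "n \<ge> 2" and "p > 0" and "q > 0" and "coprime p q"
  shows "(\<forall>i<n. (LEAST l::nat. l \<ge> 1 \<and> (\<lambda>j. int l * unitv i j) \<in> latticeA n p q)
                  = p ^ n + q ^ n)
         \<and> (p \<noteq> q \<longrightarrow>
              (\<exists>T. is_tiling n (int (p ^ n + q ^ n)) T \<and>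
                   (\<forall>t\<in>T. snd t \<in> {p, q}) \<and>
                   unilateral n (int (p ^ n + q ^ n)) T))"
proof -
  interpret tl n p q using assms by unfold_locales
  have NN: "int (p ^ n + q ^ n) = int p ^ n + int q ^ n" by simp
  show ?thesis
  proof (intro conjI allI impI)
    fix i assume "i < n"
    then show "(LEAST l::nat. l \<ge> 1 \<and> (\<lambda>j. int l * unitv i j) \<in> latticeA n p q) = p ^ n + q ^ n"
      by (rule least)
  next
    assume pq: "p \<noteq> q"
    have snd: "\<forall>t\<in>tl.T n p q. snd t \<in> {p, q}" by (auto simp: T_iff)
    show "\<exists>T. is_tiling n (int (p ^ n + q ^ n)) T \<and> (\<forall>t\<in>T. snd t \<in> {p, q}) \<and>
                   unilateral n (int (p ^ n + q ^ n)) T"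
      by (rule exI[of _ "tl.T n p q"]) (use tiling unil[OF pq] snd in \<open>simp only: NN\<close>)
  qed
qed

end
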